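(* Let $\sigma(x)=\mathrm{e}^{-x/2}$ and let $\{p_n\}_{n\ge0}$ be the orthonormal Laguerre polynomials on $(0,\infty)$, i.e. $p_n(x)=\frac{(-1)^n}{n!}\mathrm{e}^x\frac{\mathrm{d}^n}{\mathrm{d}x^n}(x^n\mathrm{e}^{-x})$, which satisfy $\int_0^\infty p_mp_n\mathrm{e}^{-x}\,\mathrm{d}x=\delta_{m,n}$. For $z=\mathrm{e}^{i\theta}$ with $|\theta|<\pi/2$ put $p_{n,z}(x)=z^{1/2}p_n(zx)$ and $N_{n,z}=\int_0^\infty|p_{n,z}(x)\sigma(zx)|^2\,\mathrm{d}x$, where $\sigma(zx)=\mathrm{e}^{-zx/2}$. Then, with $s_\theta=\cos\theta$, \[ N_{n,z}\le s_\theta^{-2n-1}\,2^{4n+2}\quad\text{for all integers } n\ge0. \]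
   Context: $z^{1/2}$ denotes the principal square root. *)

theory Defs
  imports "HOL-Analysis.Analysis"
begin

text \<open>Orthonormal Laguerre polynomial via the Rodrigues formula,
  p_n(w) = (-1)^n / n! * e^w * (d/dw)^n (w^n e^(-w)),
  taken on the complex plane (the functions involved are entire), so that
  it can be evaluated at complex arguments z*x.\<close>
definition laguerre :: "nat \<Rightarrow> complex \<Rightarrow> complex" where
  "laguerre n w = ((-1) ^ n / of_nat (fact n)) * exp w *
      (deriv ^^ n) (\<lambda>u. u ^ n * exp (- u)) w"

definition sigma :: "complex \<Rightarrow> complex" where
  "sigma w = exp (- w / 2)"

definition p_nz :: "nat \<Rightarrow> complex \<Rightarrow> real \<Rightarrow> complex" where
  "p_nz n z x = csqrt z * laguerre n (z * of_real x)"

definition N_nz :: "nat \<Rightarrow> complex \<Rightarrow> real" where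
  "N_nz n z = (LINT x:{0<..}|lborel. (cmod (p_nz n z x * sigma (z * of_real x)))\<^sup>2)"

end

theory Submission
  imports Defs "HOL-Computational_Algebra.Polynomial" "HOL-Probability.Distributions"
begin

primrec QQ :: "nat \<Rightarrow> complex poly \<Rightarrow> complex poly" where
  "QQ 0 p = p"
| "QQ (Suc m) p = pderiv (QQ m p) - QQ m p"

lemma deriv_iter:
  "(deriv ^^ m) (\<lambda>u. poly p u * exp (- u)) = (\<lambda>u. poly (QQ m p) u * exp (- u))"
proof (induction m)
  case 0
  then show ?case by simp
next
  case (Suc m)
  show ?case
  proof (rule ext)
    fix u :: complex
    have "((\<lambda>u. poly (QQ m p) u * exp (- u)) has_field_derivative
        poly (QQ (Suc m) p) u * exp (- u)) (at u)"
      by (auto intro!: derivative_eq_intros simp: algebra_simps)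
    then show "(deriv ^^ Suc m) (\<lambda>u. poly p u * exp (- u)) u = poly (QQ (Suc m) p) u * exp (- u)"
      using Suc by (simp add: DERIV_imp_deriv)
  qed
qed

lemma degree_QQ: "degree (QQ m p) \<le> degree p"
proof (induction m)
  case (Suc m)
  then show ?case
    by (simp add: degree_pderiv) (metis degree_diff_le degree_pderiv diff_le_self le_trans)
qed simp

lemma coeff_QQ:
  "i \<le> n \<Longrightarrow> cmod (coeff (QQ m (monom 1 n)) i) \<le> 2 ^ m * fact n / fact i"
proof (induction m arbitrary: i)
  case 0
  then show ?case
    by (auto simp: coeff_monom divide_simps)
next
  case (Suc m)
  let ?q = "QQ m (monom 1 n)"
  have deg: "degree ?q \<le> n" using degree_QQ[of m "monom 1 n"] by (simp add: degree_monom_eq)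
  have eq: "coeff (QQ (Suc m) (monom 1 n)) i = of_nat (Suc i) * coeff ?q (Suc i) - coeff ?q i"
    by (simp add: coeff_pderiv)
  have b1: "cmod (coeff ?q i) \<le> 2 ^ m * fact n / fact i" using Suc by simp
  have b2: "cmod (of_nat (Suc i) * coeff ?q (Suc i)) \<le> 2 ^ m * fact n / fact i"
  proof (cases "i = n")
    case True
    then have "coeff ?q (Suc i) = 0" using deg by (simp add: coeff_eq_0)
    then show ?thesis by simp
  next
    case False
    then have "Suc i \<le> n" using Suc.prems by simp
    then have "cmod (coeff ?q (Suc i)) \<le> 2 ^ m * fact n / fact (Suc i)" using Suc.IH by blast
    then have "real (Suc i) * cmod (coeff ?q (Suc i)) \<le> real (Suc i) * (2 ^ m * fact n / fact (Suc i))"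
      by (intro mult_left_mono) auto
    also have "\<dots> = 2 ^ m * fact n / fact i"
    proof -
      have f: "(fact (Suc i)::real) = real (Suc i) * fact i" by (simp del: of_nat_Suc)
      show ?thesis unfolding f by (simp del: of_nat_Suc)
    qed
    finally show ?thesis by (simp only: norm_mult norm_of_nat)
  qed
  have "cmod (coeff (QQ (Suc m) (monom 1 n)) i) \<le> cmod (of_nat (Suc i) * coeff ?q (Suc i)) + cmod (coeff ?q i)"
    unfolding eq by (rule norm_triangle_ineq4)
  also have "\<dots> \<le> 2 ^ Suc m * fact n / fact i" using b1 b2 by simp
  finally show ?case .
qed

lemma laguerre_bound:
  "cmod (laguerre n w) \<le> (\<Sum>i\<le>n. 2 ^ n / fact i * cmod w ^ i)"
proof -
  let ?q = "QQ n (monom 1 n)"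
  have deg: "degree ?q \<le> n" using degree_QQ[of n "monom 1 n"] by (simp add: degree_monom_eq)
  have pw: "(\<lambda>u::complex. u ^ n * exp (- u)) = (\<lambda>u. poly (monom 1 n) u * exp (- u))"
    by (simp add: poly_monom)
  have L: "laguerre n w = ((-1) ^ n / of_nat (fact n)) * (exp w * exp (- w)) * poly ?q w"
    unfolding laguerre_def pw deriv_iter by (simp add: algebra_simps)
  have e: "exp w * exp (- w) = 1" by (simp add: exp_minus)
  have pq: "poly ?q w = (\<Sum>i\<le>n. coeff ?q i * w ^ i)"
  proof -
    have "poly ?q w = poly (\<Sum>i\<le>n. monom (coeff ?q i) i) w"
      using poly_as_sum_of_monoms'[OF deg] by simp
    also have "\<dots> = (\<Sum>i\<le>n. coeff ?q i * w ^ i)" by (simp add: poly_sum poly_monom)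
    finally show ?thesis .
  qed
  have "cmod (laguerre n w) = cmod (poly ?q w) / fact n"
    unfolding L e by (simp add: norm_mult norm_divide norm_power)
  also have "\<dots> \<le> (\<Sum>i\<le>n. cmod (coeff ?q i) * cmod w ^ i) / fact n"
    unfolding pq by (intro divide_right_mono order.trans[OF norm_sum]) (auto simp: norm_mult norm_power)
  also have "\<dots> \<le> (\<Sum>i\<le>n. 2 ^ n * fact n / fact i * cmod w ^ i) / fact n"
    by (intro divide_right_mono sum_mono mult_right_mono coeff_QQ) auto
  also have "\<dots> = (\<Sum>i\<le>n. 2 ^ n / fact i * cmod w ^ i)"
    by (simp add: sum_divide_distrib)
  finally show ?thesis .
qed


lemma erl_int:
  fixes c :: real assumes c: "0 < c"
  shows "integrable lborel (\<lambda>x. erlang_density 0 c x * x ^ k)"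
    and "integral\<^sup>L lborel (\<lambda>x. erlang_density 0 c x * x ^ k) = fact k / c ^ k"
proof -
  have nn: "(\<integral>\<^sup>+ x. ennreal (erlang_density 0 c x * x ^ k) \<partial>lborel) = ennreal (fact k / c ^ k)"
    using nn_integral_erlang_ith_moment[OF c, of 0 k] by simp
  have ae: "AE x in lborel. 0 \<le> erlang_density 0 c x * x ^ k"
    using c by (auto simp: erlang_density_def)
  show "integrable lborel (\<lambda>x. erlang_density 0 c x * x ^ k)"
    by (rule integrableI_nn_integral_finite[OF _ ae nn]) measurable
  show "integral\<^sup>L lborel (\<lambda>x. erlang_density 0 c x * x ^ k) = fact k / c ^ k"
    by (subst integral_eq_nn_integral[OF _ ae]) (measurable, use nn c in simp)
qed

lemma pointwise:
  fixes \<theta> x :: real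
  assumes c: "0 < cos \<theta>"
  shows "indicator {0<..} x *\<^sub>R (cmod (p_nz n (cis \<theta>) x * sigma (cis \<theta> * of_real x)))\<^sup>2
    \<le> (\<Sum>i\<le>n. \<Sum>j\<le>n. (2 ^ n / fact i * (2 ^ n / fact j)) / cos \<theta> * (erlang_density 0 (cos \<theta>) x * x ^ (i + j)))"
    (is "?L \<le> ?G")
proof (cases "x > 0")
  case False
  have "0 \<le> ?G"
    using c False by (intro sum_nonneg) (auto simp: erlang_density_def)
  then show ?thesis using False by simp
next
  case True
  let ?S = "(\<Sum>i\<le>n. 2 ^ n / fact i * x ^ i)"
  let ?c = "cos \<theta>"
  have nz: "cmod (cis \<theta> * of_real x) = x" using True by (simp add: norm_mult)
  have sq: "cmod (csqrt (cis \<theta>)) = 1" by simp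
  have es: "cmod (sigma (cis \<theta> * of_real x)) = exp (- (?c * x) / 2)"
    by (simp add: sigma_def)
  have "?L = (cmod (laguerre n (cis \<theta> * of_real x)) * exp (- (?c * x) / 2))\<^sup>2"
    using True unfolding p_nz_def by (simp add: norm_mult es)
  also have "\<dots> = (cmod (laguerre n (cis \<theta> * of_real x)))\<^sup>2 * exp (- (?c * x))"
    by (simp add: power_mult_distrib power2_eq_square exp_add[symmetric])
  also have "\<dots> \<le> ?S\<^sup>2 * exp (- (?c * x))"
    using laguerre_bound[of n "cis \<theta> * of_real x"] unfolding nz
    by (intro mult_right_mono power_mono) auto
  also have "\<dots> = (\<Sum>i\<le>n. \<Sum>j\<le>n. (2 ^ n / fact i * x ^ i) * (2 ^ n / fact j * x ^ j)) * exp (- (?c * x))"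
    by (simp only: power2_eq_square sum_product)
  also have "\<dots> = (\<Sum>i\<le>n. \<Sum>j\<le>n. (2 ^ n / fact i * x ^ i) * (2 ^ n / fact j * x ^ j) * exp (- (?c * x)))"
    by (simp only: sum_distrib_right)
  also have "\<dots> = ?G"
    using True c
    by (intro sum.cong refl) (simp add: erlang_density_def power_add field_simps)
  finally show ?thesis .
qed


lemma term_bound:
  fixes c :: real assumes c: "0 < c" "c \<le> 1" and ij: "i \<le> n" "j \<le> n"
  shows "(2 ^ n / fact i * (2 ^ n / fact j)) / c * (fact (i + j) / c ^ (i + j))
     \<le> 4 ^ n / c ^ (2 * n + 1) * (2 ^ i * 2 ^ j)"
proof -
  have bf: "fact i * fact j * real ((i + j) choose i) = fact (i + j)"
    using binomial_fact_lemma[of i "i+j"] by (metis add_diff_cancel_left' le_add1 of_nat_fact of_nat_mult)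
  have b2: "real ((i + j) choose i) \<le> 2 ^ i * 2 ^ j"
  proof -
    have "real ((i + j) choose i) \<le> real (2 ^ (i + j))"
      by (simp only: of_nat_le_iff binomial_le_pow2)
    then show ?thesis by (simp add: power_add)
  qed
  have cp: "c ^ (2 * n + 1) \<le> c ^ (i + j + 1)"
    using c ij by (intro power_decreasing) auto
  have pos: "0 < c ^ (2 * n + 1)" using c by simp
  have "(2 ^ n / fact i * (2 ^ n / fact j)) / c * (fact (i + j) / c ^ (i + j))
      = 4 ^ n * real ((i + j) choose i) / c ^ (i + j + 1)"
  proof -
    have f4: "(4::real) ^ n = 2 ^ n * 2 ^ n" by (metis power_mult_distrib num_double numeral_times_numeral)
    have fi: "(fact i::real) \<noteq> 0" "(fact j::real) \<noteq> 0" by auto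
    show ?thesis unfolding bf[symmetric] f4 power_Suc2 add_Suc_right add_0_right
      using c fi by (simp add: field_simps)
  qed
  also have "\<dots> \<le> 4 ^ n * (2 ^ i * 2 ^ j) / c ^ (i + j + 1)"
    using b2 c by (intro divide_right_mono mult_left_mono) auto
  also have "\<dots> \<le> 4 ^ n * (2 ^ i * 2 ^ j) / c ^ (2 * n + 1)"
    using cp pos by (intro divide_left_mono) auto
  finally show ?thesis by simp
qed

lemma geom: "(\<Sum>i\<le>n. (2::real) ^ i) \<le> 2 ^ (n + 1)"
  by (induction n) auto


theorem theorem3:
  fixes \<theta> :: real and n :: nat
  assumes "\<bar>\<theta>\<bar> < pi / 2"
  shows "N_nz n (cis \<theta>) \<le> (2::real) ^ (4 * n + 2) / (cos \<theta>) ^ (2 * n + 1)"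
proof -
  let ?c = "cos \<theta>"
  have c: "0 < ?c" using assms by (intro cos_gt_zero_pi) auto
  have c1: "?c \<le> 1" by simp
  define G where "G x = (\<Sum>i\<le>n. \<Sum>j\<le>n. (2 ^ n / fact i * (2 ^ n / fact j)) / ?c * (erlang_density 0 ?c x * x ^ (i + j)))" for x
  have intG: "integrable lborel G"
    unfolding G_def using erl_int(1)[OF c] by auto
  have G0: "0 \<le> G x" for x
    unfolding G_def using c by (intro sum_nonneg) (auto simp: erlang_density_def)
  have "N_nz n (cis \<theta>) = integral\<^sup>L lborel (\<lambda>x. indicator {0<..} x *\<^sub>R (cmod (p_nz n (cis \<theta>) x * sigma (cis \<theta> * of_real x)))\<^sup>2)"
    unfolding N_nz_def set_lebesgue_integral_def ..
  also have "\<dots> \<le> integral\<^sup>L lborel G"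
    using intG G0 pointwise[OF c] unfolding G_def by (intro integral_mono') auto
  also have "\<dots> = (\<Sum>i\<le>n. \<Sum>j\<le>n. (2 ^ n / fact i * (2 ^ n / fact j)) / ?c * (fact (i + j) / ?c ^ (i + j)))"
    unfolding G_def using erl_int[OF c] by (simp add: integral_sum integrable_sum) (simp only: mult_ac)
  also have "\<dots> \<le> (\<Sum>i\<le>n. \<Sum>j\<le>n. 4 ^ n / ?c ^ (2 * n + 1) * (2 ^ i * 2 ^ j))"
    using c c1 by (intro sum_mono term_bound) auto
  also have "\<dots> = 4 ^ n / ?c ^ (2 * n + 1) * ((\<Sum>i\<le>n. (2::real) ^ i) * (\<Sum>i\<le>n. 2 ^ i))"
    by (subst sum_product) (simp only: sum_distrib_left)
  also have "\<dots> \<le> 4 ^ n / ?c ^ (2 * n + 1) * (2 ^ (n + 1) * 2 ^ (n + 1))"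
    using geom[of n] c by (intro mult_left_mono mult_mono) (auto intro: sum_nonneg)
  also have "\<dots> = (2::real) ^ (4 * n + 2) / ?c ^ (2 * n + 1)"
  proof -
    have "(4::real) ^ n * (2 ^ (n + 1) * 2 ^ (n + 1)) = 2 ^ (4 * n + 2)"
    proof -
      have e4: "(4::real) ^ n = 2 ^ n * 2 ^ n" by (metis power_mult_distrib num_double numeral_times_numeral)
      have ee: "4 * n + 2 = n + n + n + n + 2" by simp
      show ?thesis unfolding e4 ee power_add by simp
    qed
    then show ?thesis by (simp add: field_simps)
  qed
  finally show ?thesis .
qed

end
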